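(* Let $a,b\ge1$ be integers with $|a-b|>4$, and let $n=a+b+2$. Then $\operatorname{diam}(\mathcal{C}_3(S(a,b)))>\lfloor 3n/2\rfloor$.
   Context: The double star $S(a,b)$ is the tree obtained by joining the centers of the stars $K_{1,a}$ and $K_{1,b}$ by an edge; it has $a+b+2$ vertices. A proper 3-coloring of a tree $T=(V,E)$ is a map $f\colon V\to\mathbb{Z}/3\mathbb{Z}$ with $f(u)\neq f(v)$ for every edge $uv\in E$. The 3-coloring graph $\mathcal{C}_3(T)$ has the proper 3-colorings as vertices, two colorings adjacent iff they differ at exactly one vertex; $\operatorname{diam}$ denotes graph diameter. *)

theory Defs
  imports Main "HOL-Library.Numeral_Type" "HOL-Library.Extended_Nat"
begin

text \<open>Vertex set {0..<a+b+2}. Vertex 0 is the centre of K_{1,a} with leaves 2..a+1,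
  vertex 1 is the centre of K_{1,b} with leaves a+2..a+b+1; the two centres are joined.\<close>

definition ds_verts :: "nat \<Rightarrow> nat \<Rightarrow> nat set" where
  "ds_verts a b = {0..<a+b+2}"

definition ds_edges :: "nat \<Rightarrow> nat \<Rightarrow> nat set set" where
  "ds_edges a b = {{0,1}} \<union> {{0,v} | v. 2 \<le> v \<and> v \<le> a+1}
                  \<union> {{1,v} | v. a+2 \<le> v \<and> v \<le> a+b+1}"

text \<open>Colours are Z/3Z, the library type 3. A colouring is a map V \<rightarrow> Z/3Z,
  represented as a total function that is 0 outside V (extensional representation).\<close>

definition proper_3col :: "'v set \<Rightarrow> 'v set set \<Rightarrow> ('v \<Rightarrow> 3) set" where
  "proper_3col V E = {f. (\<forall>v. v \<notin> V \<longrightarrow> f v = 0) \<and>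
                         (\<forall>u v. {u,v} \<in> E \<longrightarrow> u \<noteq> v \<longrightarrow> f u \<noteq> f v)}"

definition col_adj :: "'v set \<Rightarrow> ('v \<Rightarrow> 3) \<Rightarrow> ('v \<Rightarrow> 3) \<Rightarrow> bool" where
  "col_adj V f g \<longleftrightarrow> card {v \<in> V. f v \<noteq> g v} = 1"

definition is_walk :: "'a set \<Rightarrow> ('a \<Rightarrow> 'a \<Rightarrow> bool) \<Rightarrow> 'a list \<Rightarrow> bool" where
  "is_walk X R p \<longleftrightarrow> p \<noteq> [] \<and> set p \<subseteq> X \<and> (\<forall>i. Suc i < length p \<longrightarrow> R (p ! i) (p ! Suc i))"

definition graph_dist :: "'a set \<Rightarrow> ('a \<Rightarrow> 'a \<Rightarrow> bool) \<Rightarrow> 'a \<Rightarrow> 'a \<Rightarrow> enat" where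
  "graph_dist X R x y =
     (INF p \<in> {p. is_walk X R p \<and> hd p = x \<and> last p = y}. enat (length p - 1))"

text \<open>Diameter: supremum of distances (infinite if the graph is disconnected).\<close>

definition graph_diam :: "'a set \<Rightarrow> ('a \<Rightarrow> 'a \<Rightarrow> bool) \<Rightarrow> enat" where
  "graph_diam X R = (SUP x \<in> X. SUP y \<in> X. graph_dist X R x y)"

definition col_graph_diam :: "'v set \<Rightarrow> 'v set set \<Rightarrow> enat" where
  "col_graph_diam V E = graph_diam (proper_3col V E) (col_adj V)"

end

theory Submission
  imports Defs
begin


lemma U3: "(UNIV::3 set) = {0,1,2}"
proof -
  have a: "card {0,1,2::3} = 3" by simp
  have "CARD(3) = 3" by simp
  then show ?thesis using a by (metis card_subset_eq finite_class.finite_UNIV subset_UNIV)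
qed

lemma c3: "(x::3) = 0 \<or> x = 1 \<or> x = 2"
  using U3 by auto

lemma all3: "(\<forall>i::3. P i) \<longleftrightarrow> P 0 \<and> P 1 \<and> P 2"
  using c3 by metis

lemma third3: "(a::3) \<noteq> b \<Longrightarrow> p \<noteq> a \<Longrightarrow> p \<noteq> b \<Longrightarrow> q \<noteq> a \<Longrightarrow> q \<noteq> b \<Longrightarrow> p = q"
  using c3[of a] c3[of b] c3[of p] c3[of q] by auto

type_synonym form = "nat \<times> 3 \<times> nat \<times> 3 \<times> nat"

definition alpha :: "form \<Rightarrow> 3 \<Rightarrow> nat" where
  "alpha s i = (case s of (k,wa,ta,wb,tb) \<Rightarrow> ta + (if i = wa then 0 else 1))"
definition beta :: "form \<Rightarrow> 3 \<Rightarrow> nat" where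
  "beta s i = (case s of (k,wa,ta,wb,tb) \<Rightarrow> tb + (if i = wb then 0 else 1))"
definition fval :: "nat set \<Rightarrow> nat set \<Rightarrow> form \<Rightarrow> (nat \<Rightarrow> 3) \<Rightarrow> nat" where
  "fval L M s h = fst s + (\<Sum>v\<in>L. alpha s (h v)) + (\<Sum>v\<in>M. beta s (h v))"
definition prep_c :: "3 \<Rightarrow> form \<Rightarrow> form" where
  "prep_c y s = (case s of (k,wa,ta,wb,tb) \<Rightarrow> (k+1, y, alpha s y, wb, tb))"
definition prep_d :: "3 \<Rightarrow> form \<Rightarrow> form" where
  "prep_d x s = (case s of (k,wa,ta,wb,tb) \<Rightarrow> (k+1, wa, ta, x, beta s x))"
definition fdom :: "form \<Rightarrow> form \<Rightarrow> bool" where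
  "fdom s t \<longleftrightarrow> fst s \<le> fst t \<and> (\<forall>i. alpha s i \<le> alpha t i) \<and> (\<forall>i. beta s i \<le> beta t i)"

definition fam :: "3 \<Rightarrow> 3 \<Rightarrow> form list" where
  "fam x y = (if x = 0 \<and> y = 1 then [(1,1,1,0,0),(5,2,1,0,3)]
    else if x = 0 \<and> y = 2 then [(2,1,1,0,0),(4,2,1,1,2)]
    else if x = 1 \<and> y = 0 then [(2,0,0,2,1),(4,2,2,1,1)]
    else if x = 1 \<and> y = 2 then [(3,0,0,1,2),(3,2,2,0,0)]
    else if x = 2 \<and> y = 0 then [(1,0,0,2,1),(5,0,3,1,1)]
    else if x = 2 \<and> y = 1 then [(0,0,0,0,0)] else [])"

lemma clos_c: "x \<noteq> x' \<Longrightarrow> y \<noteq> x \<Longrightarrow> y \<noteq> x' \<Longrightarrow> s \<in> set (fam x' y) \<Longrightarrow>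
   \<exists>t\<in>set (fam x y). fdom t (prep_c y s)"
  using c3[of x] c3[of x'] c3[of y]
  by (elim disjE) (auto simp: fam_def fdom_def alpha_def beta_def prep_c_def all3)

lemma clos_d: "y \<noteq> y' \<Longrightarrow> x \<noteq> y \<Longrightarrow> x \<noteq> y' \<Longrightarrow> s \<in> set (fam x y') \<Longrightarrow>
   \<exists>t\<in>set (fam x y). fdom t (prep_d x s)"
  using c3[of x] c3[of y'] c3[of y]
  by (elim disjE) (auto simp: fam_def fdom_def alpha_def beta_def prep_d_def all3)

lemma alpha_le: "alpha s i \<le> alpha s j + 1"
  by (cases s) (auto simp: alpha_def)
lemma beta_le: "beta s i \<le> beta s j + 1"
  by (cases s) (auto simp: beta_def)

lemma fdom_mono: "fdom t s \<Longrightarrow> fval L M t h \<le> fval L M s h"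
  unfolding fdom_def fval_def
  by (intro add_mono sum_mono) auto

lemma alpha_prep_c: "alpha (prep_c y s) i = alpha s y + (if i = y then 0 else 1)"
  by (cases s) (simp add: prep_c_def alpha_def)
lemma beta_prep_c: "beta (prep_c y s) i = beta s i"
  by (cases s) (simp add: prep_c_def beta_def)
lemma fst_prep_c: "fst (prep_c y s) = fst s + 1"
  by (cases s) (simp add: prep_c_def)
lemma beta_prep_d: "beta (prep_d x s) i = beta s x + (if i = x then 0 else 1)"
  by (cases s) (simp add: prep_d_def beta_def)
lemma alpha_prep_d: "alpha (prep_d x s) i = alpha s i"
  by (cases s) (simp add: prep_d_def alpha_def)
lemma fst_prep_d: "fst (prep_d x s) = fst s + 1"
  by (cases s) (simp add: prep_d_def)

lemma fval_prep_c:
  assumes "\<forall>v\<in>L. h v = y \<and> h' v = y" "\<forall>v\<in>M. h v = h' v"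
  shows "fval L M (prep_c y s) h = fval L M s h' + 1"
proof -
  have "(\<Sum>v\<in>L. alpha (prep_c y s) (h v)) = (\<Sum>v\<in>L. alpha s (h' v))"
    using assms(1) by (intro sum.cong) (auto simp: alpha_prep_c)
  moreover have "(\<Sum>v\<in>M. beta (prep_c y s) (h v)) = (\<Sum>v\<in>M. beta s (h' v))"
    using assms(2) by (intro sum.cong) (auto simp: beta_prep_c)
  ultimately show ?thesis by (simp add: fval_def fst_prep_c)
qed

lemma fval_prep_d:
  assumes "\<forall>v\<in>M. h v = x \<and> h' v = x" "\<forall>v\<in>L. h v = h' v"
  shows "fval L M (prep_d x s) h = fval L M s h' + 1"
proof -
  have "(\<Sum>v\<in>M. beta (prep_d x s) (h v)) = (\<Sum>v\<in>M. beta s (h' v))"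
    using assms(1) by (intro sum.cong) (auto simp: beta_prep_d)
  moreover have "(\<Sum>v\<in>L. alpha (prep_d x s) (h v)) = (\<Sum>v\<in>L. alpha s (h' v))"
    using assms(2) by (intro sum.cong) (auto simp: alpha_prep_d)
  ultimately show ?thesis by (simp add: fval_def fst_prep_d)
qed

lemma sum_one_change:
  fixes \<phi> :: "3 \<Rightarrow> nat"
  assumes "finite A" "\<forall>v\<in>A. v \<noteq> u \<longrightarrow> h v = h' v" "\<And>i j. \<phi> i \<le> \<phi> j + 1"
  shows "(\<Sum>v\<in>A. \<phi> (h v)) \<le> (\<Sum>v\<in>A. \<phi> (h' v)) + (if u \<in> A then 1 else 0)"
proof (cases "u \<in> A")
  case True
  have e: "(\<Sum>v\<in>A-{u}. \<phi> (h v)) = (\<Sum>v\<in>A-{u}. \<phi> (h' v))"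
    using assms(2) by (intro sum.cong) auto
  have "(\<Sum>v\<in>A. \<phi> (h v)) = \<phi> (h u) + (\<Sum>v\<in>A-{u}. \<phi> (h v))"
    using True assms(1) by (simp add: sum.remove)
  moreover have "(\<Sum>v\<in>A. \<phi> (h' v)) = \<phi> (h' u) + (\<Sum>v\<in>A-{u}. \<phi> (h' v))"
    using True assms(1) by (simp add: sum.remove)
  ultimately show ?thesis using e assms(3)[of "h u" "h' u"] True by simp
next
  case False
  then have "(\<Sum>v\<in>A. \<phi> (h v)) = (\<Sum>v\<in>A. \<phi> (h' v))"
    using assms(2) by (intro sum.cong) auto
  then show ?thesis by simp
qed

definition dsetup :: "nat set \<Rightarrow> nat set set \<Rightarrow> nat \<Rightarrow> nat \<Rightarrow> nat set \<Rightarrow> nat set \<Rightarrow> bool" where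
  "dsetup V E c d L M \<longleftrightarrow> finite L \<and> finite M \<and> c \<noteq> d \<and> c \<notin> L \<and> c \<notin> M \<and> d \<notin> L \<and> d \<notin> M
     \<and> L \<inter> M = {} \<and> V = {c,d} \<union> L \<union> M \<and> {c,d} \<in> E \<and> (\<forall>l\<in>L. {c,l} \<in> E) \<and> (\<forall>l\<in>M. {d,l} \<in> E)"

lemma proper_facts:
  assumes "dsetup V E c d L M" "h \<in> proper_3col V E"
  shows "h c \<noteq> h d" "\<forall>l\<in>L. h l \<noteq> h c" "\<forall>l\<in>M. h l \<noteq> h d"
  using assms unfolding dsetup_def proper_3col_def by (auto, metis+)

lemma step:
  assumes S: "dsetup V E c d L M" and h: "h \<in> proper_3col V E" and h': "h' \<in> proper_3col V E"
    and adj: "col_adj V h h'" and s: "s \<in> set (fam (h' c) (h' d))"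
  shows "\<exists>t\<in>set (fam (h c) (h d)). fval L M t h \<le> fval L M s h' + 1"
proof -
  from adj obtain u where U: "{v\<in>V. h v \<noteq> h' v} = {u}"
    unfolding col_adj_def by (auto simp: card_1_singleton_iff)
  hence uV: "u \<in> V" and hu: "h u \<noteq> h' u" and eq: "\<And>v. v \<in> V \<Longrightarrow> v \<noteq> u \<Longrightarrow> h v = h' v"
    by auto
  have V: "V = {c,d} \<union> L \<union> M" and fin: "finite L" "finite M" and LM: "L \<inter> M = {}"
    and cd: "c \<noteq> d" "c \<notin> L" "c \<notin> M" "d \<notin> L" "d \<notin> M"
    using S by (auto simp: dsetup_def)
  note P = proper_facts[OF S h] and P' = proper_facts[OF S h']
  consider "u = c" | "u = d" | "u \<in> L" | "u \<in> M" using uV V by auto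
  then show ?thesis
  proof cases
    case 1
    have dd: "h d = h' d" using eq V cd 1 by auto
    have Ly: "\<forall>v\<in>L. h v = h d \<and> h' v = h d"
    proof
      fix v assume v: "v \<in> L"
      have hv: "h v = h' v" using eq V cd 1 v by auto
      have "h v = h d"
        by (rule third3[of "h c" "h' c"]) (use hu 1 P P' v hv dd in auto)
      then show "h v = h d \<and> h' v = h d" using hv by simp
    qed
    have Mq: "\<forall>v\<in>M. h v = h' v" using eq V cd 1 by auto
    have "h d \<noteq> h c" "h d \<noteq> h' c" using P(1) P'(1) dd by auto
    then obtain t where t: "t \<in> set (fam (h c) (h d))" "fdom t (prep_c (h d) s)"
      using clos_c[of "h c" "h' c" "h d" s] hu 1 s dd by auto
    have "fval L M t h \<le> fval L M (prep_c (h d) s) h" by (rule fdom_mono[OF t(2)])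
    also have "\<dots> = fval L M s h' + 1" by (rule fval_prep_c[OF Ly Mq])
    finally show ?thesis using t(1) by blast
  next
    case 2
    have cc: "h c = h' c" using eq V cd 2 by auto
    have My: "\<forall>v\<in>M. h v = h c \<and> h' v = h c"
    proof
      fix v assume v: "v \<in> M"
      have hv: "h v = h' v" using eq V cd 2 v by auto
      have "h v = h c"
        by (rule third3[of "h d" "h' d"]) (use hu 2 P P' v hv cc in auto)
      then show "h v = h c \<and> h' v = h c" using hv by simp
    qed
    have Lq: "\<forall>v\<in>L. h v = h' v" using eq V cd 2 by auto
    have "h c \<noteq> h d" "h c \<noteq> h' d" using P(1) P'(1) cc by auto
    then obtain t where t: "t \<in> set (fam (h c) (h d))" "fdom t (prep_d (h c) s)"
      using clos_d[of "h d" "h' d" "h c" s] hu 2 s cc by auto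
    have "fval L M t h \<le> fval L M (prep_d (h c) s) h" by (rule fdom_mono[OF t(2)])
    also have "\<dots> = fval L M s h' + 1" by (rule fval_prep_d[OF My Lq])
    finally show ?thesis using t(1) by blast
  next
    case 3
    have cc: "h c = h' c" "h d = h' d" using eq V cd 3 by auto
    have "u \<notin> M" using LM 3 by auto
    have a: "(\<Sum>v\<in>L. alpha s (h v)) \<le> (\<Sum>v\<in>L. alpha s (h' v)) + 1"
      using sum_one_change[OF fin(1), of u h h' "alpha s"] eq V 3 alpha_le by auto
    have b: "(\<Sum>v\<in>M. beta s (h v)) \<le> (\<Sum>v\<in>M. beta s (h' v))"
      using sum_one_change[OF fin(2), of u h h' "beta s"] eq V 3 beta_le \<open>u \<notin> M\<close> by auto
    have "fval L M s h \<le> fval L M s h' + 1" using a b by (simp add: fval_def)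
    then show ?thesis using s cc by auto
  next
    case 4
    have cc: "h c = h' c" "h d = h' d" using eq V cd 4 by auto
    have "u \<notin> L" using LM 4 by auto
    have a: "(\<Sum>v\<in>L. alpha s (h v)) \<le> (\<Sum>v\<in>L. alpha s (h' v))"
      using sum_one_change[OF fin(1), of u h h' "alpha s"] eq V 4 alpha_le \<open>u \<notin> L\<close> by auto
    have b: "(\<Sum>v\<in>M. beta s (h v)) \<le> (\<Sum>v\<in>M. beta s (h' v)) + 1"
      using sum_one_change[OF fin(2), of u h h' "beta s"] eq V 4 beta_le by auto
    have "fval L M s h \<le> fval L M s h' + 1" using a b by (simp add: fval_def)
    then show ?thesis using s cc by auto
  qed
qed


lemma walk_tail:
  assumes "is_walk X R (x # y # zs)"
  shows "is_walk X R (y # zs)" "R x y" "x \<in> X" "y \<in> X"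
proof -
  have A: "\<forall>i. Suc i < length (x#y#zs) \<longrightarrow> R ((x#y#zs) ! i) ((x#y#zs) ! Suc i)"
    and B: "set (x#y#zs) \<subseteq> X" using assms by (auto simp: is_walk_def)
  show "is_walk X R (y # zs)" unfolding is_walk_def
  proof (intro conjI allI impI)
    fix i assume "Suc i < length (y#zs)"
    then show "R ((y # zs) ! i) ((y # zs) ! Suc i)" using A[rule_format, of "Suc i"] by simp
  qed (use B in auto)
  show "R x y" using A[rule_format, of 0] by simp
  show "x \<in> X" "y \<in> X" using B by auto
qed

lemma walk_bound:
  assumes S: "dsetup V E c d L M"
  shows "is_walk (proper_3col V E) (col_adj V) p \<Longrightarrow> s \<in> set (fam (last p c) (last p d)) \<Longrightarrow>
    \<exists>t\<in>set (fam (hd p c) (hd p d)). fval L M t (hd p) \<le> fval L M s (last p) + (length p - 1)"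
proof (induction p rule: induct_list012)
  case 1
  then show ?case by (simp add: is_walk_def)
next
  case (2 x)
  then show ?case by auto
next
  case (3 x y zs)
  note W = walk_tail[OF "3.prems"(1)]
  obtain t1 where t1: "t1 \<in> set (fam (y c) (y d))"
    "fval L M t1 y \<le> fval L M s (last (y#zs)) + (length (y#zs) - 1)"
    using "3.IH"(2)[OF W(1)] "3.prems"(2) by auto
  obtain t where t: "t \<in> set (fam (x c) (x d))" "fval L M t x \<le> fval L M t1 y + 1"
    using step[OF S W(3) W(4) W(2) t1(1)] by auto
  show ?case using t t1 by (intro bexI[of _ t]) auto
qed

lemma fval_split:
  assumes "finite L" "K \<subseteq> L" "\<forall>v\<in>K. f v = p" "\<forall>v\<in>L-K. f v = q" "\<forall>v\<in>M. f v = r"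
  shows "fval L M t f = fst t + card K * alpha t p + (card L - card K) * alpha t q + card M * beta t r"
proof -
  have "(\<Sum>v\<in>L. alpha t (f v)) = (\<Sum>v\<in>L-K. alpha t (f v)) + (\<Sum>v\<in>K. alpha t (f v))"
    using assms(1,2) by (simp add: sum.subset_diff)
  also have "\<dots> = (\<Sum>v\<in>L-K. alpha t q) + (\<Sum>v\<in>K. alpha t p)"
    using assms(3,4) by (intro arg_cong2[where f="(+)"] sum.cong) auto
  also have "\<dots> = (card L - card K) * alpha t q + card K * alpha t p"
    using assms(1,2) by (simp add: card_Diff_subset finite_subset)
  finally have 1: "(\<Sum>v\<in>L. alpha t (f v)) = (card L - card K) * alpha t q + card K * alpha t p" .
  have 2: "(\<Sum>v\<in>M. beta t (f v)) = card M * beta t r"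
    using assms(5) by simp
  show ?thesis using 1 2 by (simp add: fval_def)
qed

lemma abstract_bound:
  assumes S: "dsetup V E c d L M"
    and f: "f \<in> proper_3col V E" and g: "g \<in> proper_3col V E"
    and fc: "f c = 0" "f d = 1" and gc: "g c = 2" "g d = 1" and g0: "\<forall>v\<in>L\<union>M. g v = 0"
    and fM: "\<forall>v\<in>M. f v = 2" and K: "K \<subseteq> L" and fK: "\<forall>v\<in>K. f v = 1" and fL: "\<forall>v\<in>L-K. f v = 2"
    and n1: "N + 1 + card K \<le> 2 * card L + card M + 1"
    and n2: "N + 1 \<le> card L + card K + 4 * card M + 5"
  shows "enat N < col_graph_diam V E"
proof -
  have finL: "finite L" using S by (simp add: dsetup_def)
  have cK: "card K \<le> card L" using K finL by (simp add: card_mono)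
  have lower: "N + 1 \<le> fval L M t f" if "t \<in> set (fam 0 1)" for t
  proof -
    have e: "fval L M t f = fst t + card K * alpha t 1 + (card L - card K) * alpha t 2 + card M * beta t 2"
      by (rule fval_split[OF finL K fK fL fM])
    from that have "t = (1,1,1,0,0) \<or> t = (5,2,1,0,3)" by (simp add: fam_def)
    then show ?thesis
    proof
      assume "t = (1,1,1,0,0)"
      then have "fval L M t f = 1 + card K + (card L - card K) * 2 + card M"
        using e by (simp add: alpha_def beta_def)
      then show ?thesis using n1 cK by linarith
    next
      assume "t = (5,2,1,0,3)"
      then have "fval L M t f = 5 + card K * 2 + (card L - card K) + card M * 4"
        using e by (simp add: alpha_def beta_def)
      then show ?thesis using n2 cK by linarith
    qed
  qed
  have dist: "enat (N+1) \<le> graph_dist (proper_3col V E) (col_adj V) f g"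
    unfolding graph_dist_def
  proof (rule INF_greatest)
    fix p assume "p \<in> {p. is_walk (proper_3col V E) (col_adj V) p \<and> hd p = f \<and> last p = g}"
    then have W: "is_walk (proper_3col V E) (col_adj V) p" and hp: "hd p = f" "last p = g" by auto
    have s0: "(0,0,0,0,0) \<in> set (fam (last p c) (last p d))" using hp gc by (simp add: fam_def)
    have v0: "fval L M (0,0,0,0,0) g = 0"
      using g0 by (simp add: fval_def alpha_def beta_def)
    obtain t where t: "t \<in> set (fam 0 1)" "fval L M t f \<le> 0 + (length p - 1)"
      using walk_bound[OF S W s0] hp v0 fc by auto
    show "enat (N+1) \<le> enat (length p - 1)" using lower[OF t(1)] t(2) by simp
  qed
  have "graph_dist (proper_3col V E) (col_adj V) f g
     \<le> (SUP y\<in>proper_3col V E. graph_dist (proper_3col V E) (col_adj V) f y)"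
    by (rule SUP_upper[OF g])
  also have "\<dots> \<le> col_graph_diam V E"
    unfolding col_graph_diam_def graph_diam_def by (rule SUP_upper[OF f])
  finally have dd: "graph_dist (proper_3col V E) (col_adj V) f g \<le> col_graph_diam V E" .
  have "enat N < enat (N+1)" by simp
  also note dist
  also note dd
  finally show ?thesis .
qed


definition fcol :: "nat set \<Rightarrow> nat \<Rightarrow> nat \<Rightarrow> nat set \<Rightarrow> nat \<Rightarrow> 3" where
  "fcol V c d K v = (if v = c then 0 else if v = d then 1 else if v \<in> K then 1 else if v \<in> V then 2 else 0)"
definition gcol :: "nat \<Rightarrow> nat \<Rightarrow> nat \<Rightarrow> 3" where
  "gcol c d v = (if v = c then 2 else if v = d then 1 else 0)"

lemma final_generic:
  assumes S: "dsetup V E c d L M"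
    and Esub: "\<forall>e\<in>E. e = {c,d} \<or> (\<exists>l\<in>L. e = {c,l}) \<or> (\<exists>l\<in>M. e = {d,l})"
    and K: "K \<subseteq> L"
    and n1: "N + 1 + card K \<le> 2 * card L + card M + 1"
    and n2: "N + 1 \<le> card L + card K + 4 * card M + 5"
  shows "enat N < col_graph_diam V E"
proof -
  have V: "V = {c,d} \<union> L \<union> M" and LM: "L \<inter> M = {}"
    and cd: "c \<noteq> d" "c \<notin> L" "c \<notin> M" "d \<notin> L" "d \<notin> M"
    using S by (auto simp: dsetup_def)
  have KM: "\<forall>v\<in>M. v \<notin> K" using K LM by auto
  have fc: "fcol V c d K c = 0" "fcol V c d K d = 1" using cd by (simp_all add: fcol_def)
  have gc: "gcol c d c = 2" "gcol c d d = 1" using cd by (simp_all add: gcol_def)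
  have fM: "\<forall>v\<in>M. fcol V c d K v = 2"
  proof
    fix v assume v: "v \<in> M"
    then have "v \<noteq> c" "v \<noteq> d" "v \<notin> K" "v \<in> V" using cd KM V by auto
    then show "fcol V c d K v = 2" by (simp add: fcol_def)
  qed
  have fK: "\<forall>v\<in>K. fcol V c d K v = 1"
  proof
    fix v assume v: "v \<in> K"
    then have "v \<noteq> c" "v \<noteq> d" using cd K by auto
    then show "fcol V c d K v = 1" using v by (simp add: fcol_def)
  qed
  have fLK: "\<forall>v\<in>L - K. fcol V c d K v = 2"
  proof
    fix v assume v: "v \<in> L - K"
    then have "v \<noteq> c" "v \<noteq> d" "v \<notin> K" "v \<in> V" using cd V by auto
    then show "fcol V c d K v = 2" by (simp add: fcol_def)
  qed
  have fL: "\<forall>v\<in>L. fcol V c d K v \<noteq> 0"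
  proof
    fix v assume v: "v \<in> L"
    show "fcol V c d K v \<noteq> 0"
    proof (cases "v \<in> K")
      case True then show ?thesis using fK by simp
    next
      case False then show ?thesis using fLK v by simp
    qed
  qed
  have g0: "\<forall>v\<in>L \<union> M. gcol c d v = 0"
  proof
    fix v assume "v \<in> L \<union> M"
    then have "v \<noteq> c" "v \<noteq> d" using cd by auto
    then show "gcol c d v = 0" by (simp add: gcol_def)
  qed
  have ecases: "(u = c \<and> v = d \<or> u = d \<and> v = c) \<or> (\<exists>l\<in>L. u = c \<and> v = l \<or> u = l \<and> v = c)
      \<or> (\<exists>l\<in>M. u = d \<and> v = l \<or> u = l \<and> v = d)" if "{u,v} \<in> E" for u v
  proof -
    have D: "{u,v} = {c,d} \<or> (\<exists>l\<in>L. {u,v} = {c,l}) \<or> (\<exists>l\<in>M. {u,v} = {d,l})"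
      by (rule Esub[rule_format, OF that])
    then show ?thesis
    proof (elim disjE bexE)
      assume "{u,v} = {c,d}"
      then have "u = c \<and> v = d \<or> u = d \<and> v = c" by (simp add: doubleton_eq_iff)
      then show ?thesis by (rule disjI1)
    next
      fix l assume l: "l \<in> L" "{u,v} = {c,l}"
      then have "u = c \<and> v = l \<or> u = l \<and> v = c" by (simp add: doubleton_eq_iff)
      then show ?thesis using l(1) by blast
    next
      fix l assume l: "l \<in> M" "{u,v} = {d,l}"
      then have "u = d \<and> v = l \<or> u = l \<and> v = d" by (simp add: doubleton_eq_iff)
      then show ?thesis using l(1) by blast
    qed
  qed
  have f: "fcol V c d K \<in> proper_3col V E"
    unfolding proper_3col_def
  proof (intro CollectI conjI allI impI)
    fix v assume "v \<notin> V"
    then have "v \<noteq> c" "v \<noteq> d" "v \<notin> K" using V K by auto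
    then show "fcol V c d K v = 0" using \<open>v \<notin> V\<close> by (simp add: fcol_def)
  next
    fix u v assume e: "{u,v} \<in> E" and uv: "u \<noteq> v"
    have n: "fcol V c d K u \<noteq> fcol V c d K v" if "(u = c \<and> v = d \<or> u = d \<and> v = c) \<or> (\<exists>l\<in>L. u = c \<and> v = l \<or> u = l \<and> v = c)
      \<or> (\<exists>l\<in>M. u = d \<and> v = l \<or> u = l \<and> v = d)" for u v
      using that fc fL fM by (elim disjE bexE conjE) auto
    show "fcol V c d K u \<noteq> fcol V c d K v" by (rule n[OF ecases[OF e]])
  qed
  have g: "gcol c d \<in> proper_3col V E"
    unfolding proper_3col_def
  proof (intro CollectI conjI allI impI)
    fix v assume "v \<notin> V"
    then have "v \<noteq> c" "v \<noteq> d" using V by auto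
    then show "gcol c d v = 0" by (simp add: gcol_def)
  next
    fix u v assume e: "{u,v} \<in> E" and uv: "u \<noteq> v"
    have n: "gcol c d u \<noteq> gcol c d v" if "(u = c \<and> v = d \<or> u = d \<and> v = c) \<or> (\<exists>l\<in>L. u = c \<and> v = l \<or> u = l \<and> v = c)
      \<or> (\<exists>l\<in>M. u = d \<and> v = l \<or> u = l \<and> v = d)" for u v
      using that gc g0 by (elim disjE bexE conjE) auto
    show "gcol c d u \<noteq> gcol c d v" by (rule n[OF ecases[OF e]])
  qed
  show ?thesis by (rule abstract_bound[OF S f g fc gc g0 fM K fK fLK n1 n2])
qed


lemma VV: "ds_verts a b = {0,1} \<union> {2..a+1} \<union> {a+2..a+b+1}"
    unfolding ds_verts_def by auto
lemma E1: "{0,1} \<in> ds_edges a b" unfolding ds_edges_def by auto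
lemma E2: "\<forall>l\<in>{2..a+1}. {0,l} \<in> ds_edges a b" unfolding ds_edges_def by auto
lemma E3: "\<forall>l\<in>{a+2..a+b+1}. {1,l} \<in> ds_edges a b" unfolding ds_edges_def by auto

lemma Es: "\<forall>e\<in>ds_edges a b. e = {0,1} \<or> (\<exists>l\<in>{2..a+1}. e = {0,l}) \<or> (\<exists>l\<in>{a+2..a+b+1}. e = {1,l})"
proof
  fix e assume "e \<in> ds_edges a b"
  then consider "e = {0,1}" | v where "e = {0,v}" "2 \<le> v" "v \<le> a+1"
    | v where "e = {1,v}" "a+2 \<le> v" "v \<le> a+b+1"
    unfolding ds_edges_def by blast
  then show "e = {0,1} \<or> (\<exists>l\<in>{2..a+1}. e = {0,l}) \<or> (\<exists>l\<in>{a+2..a+b+1}. e = {1,l})"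
  proof cases
    case 1 then show ?thesis by simp
  next
    case (2 v) then have "v \<in> {2..a+1}" by simp
    then show ?thesis using 2(1) by blast
  next
    case (3 v) then have "v \<in> {a+2..a+b+1}" by simp
    then show ?thesis using 3(1) by blast
  qed
qed

lemma Es': "\<forall>e\<in>ds_edges a b. e = {1,0} \<or> (\<exists>l\<in>{a+2..a+b+1}. e = {1,l}) \<or> (\<exists>l\<in>{2..a+1}. e = {0,l})"
proof
  fix e assume "e \<in> ds_edges a b"
  then have "e = {0,1} \<or> (\<exists>l\<in>{2..a+1}. e = {0,l}) \<or> (\<exists>l\<in>{a+2..a+b+1}. e = {1,l})"
    using Es by blast
  moreover have "{0,1} = {1,0::nat}" by auto
  ultimately show "e = {1,0} \<or> (\<exists>l\<in>{a+2..a+b+1}. e = {1,l}) \<or> (\<exists>l\<in>{2..a+1}. e = {0,l})"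
    by metis
qed

lemma ds1: "dsetup (ds_verts a b) (ds_edges a b) 0 1 {2..a+1} {a+2..a+b+1}"
  unfolding dsetup_def using VV E1 E2 E3 by (intro conjI) auto

lemma ds2: "dsetup (ds_verts a b) (ds_edges a b) 1 0 {a+2..a+b+1} {2..a+1}"
proof -
  have "{1,0} \<in> ds_edges a b" using E1 by (simp add: insert_commute)
  moreover have "ds_verts a b = {1,0} \<union> {a+2..a+b+1} \<union> {2..a+1}" using VV by auto
  ultimately show ?thesis
    unfolding dsetup_def using E2 E3 by (intro conjI) auto
qed

lemma ar1:
  fixes a b N :: nat
  assumes "b + 5 \<le> a" "1 \<le> b" "N = 3*(a+b+2) div 2"
  shows "2*a+b-N \<le> a" "N + 1 + (2*a+b-N) \<le> 2*a+b+1" "N+1 \<le> a + (2*a+b-N) + 4*b + 5"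
proof -
  have h1: "2*N \<le> 3*a+3*b+6" "3*a+3*b+6 \<le> 2*N+1" using assms(3) by auto
  have n1: "N \<le> 2*a+b" using h1 assms(1) by presburger
  have n2: "a+b \<le> N" using h1 by linarith
  obtain k where k: "k = 2*a+b-N" by simp
  have k2: "k + N = 2*a+b" using n1 k by simp
  show "2*a+b-N \<le> a" using k k2 n2 by linarith
  show "N + 1 + (2*a+b-N) \<le> 2*a+b+1" using k k2 by linarith
  show "N+1 \<le> a + (2*a+b-N) + 4*b + 5" using k k2 h1 assms(2) by linarith
qed

theorem mainTheorem14:
  fixes a b :: nat
  assumes "a \<ge> 1" and "b \<ge> 1" and "\<bar>int a - int b\<bar> > 4"
  shows "col_graph_diam (ds_verts a b) (ds_edges a b) > enat ((3 * (a + b + 2)) div 2)"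
proof -
  define N where "N = (3 * (a + b + 2)) div 2"
  consider "a \<ge> b + 5" | "b \<ge> a + 5" using assms(3) by linarith
  then show ?thesis
  proof cases
    case 1
    define k where "k = 2*a + b - N"
    note A = ar1[OF 1 assms(2) N_def]
    have "enat N < col_graph_diam (ds_verts a b) (ds_edges a b)"
    proof (rule final_generic[OF ds1 Es, of "{2..<2+k}"])
      show "{2..<2+k} \<subseteq> {2..a+1}" using A(1) unfolding k_def by auto
      show "N + 1 + card {2..<2+k} \<le> 2 * card {2..a+1} + card {a+2..a+b+1} + 1"
        using A(2) unfolding k_def by simp
      show "N + 1 \<le> card {2..a+1} + card {2..<2+k} + 4 * card {a+2..a+b+1} + 5"
        using A(3) unfolding k_def by simp
    qed
    then show ?thesis unfolding N_def by simp
  next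
    case 2
    define k where "k = 2*b + a - N"
    have N': "N = 3*(b+a+2) div 2" unfolding N_def by (simp add: add.commute)
    note A = ar1[OF 2 assms(1) N']
    have "enat N < col_graph_diam (ds_verts a b) (ds_edges a b)"
    proof (rule final_generic[OF ds2 Es', of "{a+2..<a+2+k}"])
      show "{a+2..<a+2+k} \<subseteq> {a+2..a+b+1}" using A(1) unfolding k_def by auto
      show "N + 1 + card {a+2..<a+2+k} \<le> 2 * card {a+2..a+b+1} + card {2..a+1} + 1"
        using A(2) unfolding k_def by simp
      show "N + 1 \<le> card {a+2..a+b+1} + card {a+2..<a+2+k} + 4 * card {2..a+1} + 5"
        using A(3) unfolding k_def by simp
    qed
    then show ?thesis unfolding N_def by simp
  qed
qed

end
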